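(* Let $C>0$, $\epsilon\in(0,1)$ and set $K:=\frac{C\cos\left(\epsilon\frac{\pi}{2}\right)}{3^{\epsilon/2}}$. There exists $k\in(0,1)$ depending on $C$ and $\epsilon$ such that $$k\exp\left(K|z|^\epsilon\right)\le\left|e^{z}\right|\le\exp(|z|)$$ for all $z\in U_C^\epsilon$.
   Context: $H(0)=\{z\in\mathbb{C}:\operatorname{Re}z>0\}$, and $U_C^\epsilon:=\phi_C^\epsilon(H(0))$ where $\phi_C^\epsilon(z)=z+C(1+z)^\epsilon$ with the principal branch of the power function. *)

theory Defs
  imports "HOL-Analysis.Analysis"
begin

definition right_half_plane :: "complex set" where
  "right_half_plane = {z. Re z > 0}"

text \<open>phi_C^eps(z) = z + C (1+z)^eps with the principal branch (powr on complex uses Ln).\<close>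
definition phi_map :: "real \<Rightarrow> real \<Rightarrow> complex \<Rightarrow> complex" where
  "phi_map C \<epsilon> z = z + of_real C * (1 + z) powr (of_real \<epsilon>)"

definition U_set :: "real \<Rightarrow> real \<Rightarrow> complex set" where
  "U_set C \<epsilon> = phi_map C \<epsilon> ` right_half_plane"

end

theory Submission imports Defs begin
lemma big_t:
  fixes C e t :: real
  assumes "C > 0" "0<e" "e<1" "t \<ge> max 4 ((4*C) powr (1/(1-e)))"
  shows "1 + C * t powr e \<le> t/2"
proof -
  have t4: "t \<ge> 4" using assms by auto
  have "(4*C) = ((4*C) powr (1/(1-e))) powr (1-e)"
    using assms by (simp add: powr_powr)
  also have "\<dots> \<le> t powr (1-e)"
    using assms by (intro powr_mono2) auto
  finally have h: "4*C \<le> t powr (1-e)" .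
  have "t = t powr e * t powr (1-e)" using t4 by (simp add: powr_add[symmetric])
  hence "4*C * t powr e \<le> t" using h
    by (metis mult.commute mult_left_mono powr_ge_zero)
  thus ?thesis using t4 by simp
qed
lemma sq3: "(t::real) \<ge> 0 \<Longrightarrow> (sqrt 3 * t) powr e = 3 powr (e/2) * t powr e"
  by (simp add: powr_mult powr_half_sqrt[symmetric] powr_powr)
lemma re_powr:
  assumes "Re u > 0" "0<e" "e<1"
  shows "Re (u powr of_real e) \<ge> cmod u powr e * cos (e*pi/2)"
proof -
  have u0: "u \<noteq> 0" using assms by auto
  have a: "\<bar>Im (Ln u)\<bar> < pi/2" using assms(1) Re_Ln_pos_lt[OF u0] by auto
  have eq: "Re (u powr of_real e) = cmod u powr e * cos (e * Im (Ln u))"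
    using u0 by (simp add: powr_def Re_exp)
  have "\<bar>e * Im (Ln u)\<bar> \<le> e*pi/2" using a assms by (simp add: abs_mult)
  hence "cos (e*pi/2) \<le> cos \<bar>e * Im (Ln u)\<bar>"
    by (intro cos_monotone_0_pi_le) (use assms in auto)
  hence "cos (e*pi/2) \<le> cos (e * Im (Ln u))" by simp
  thus ?thesis unfolding eq by (intro mult_left_mono) auto
qed

theorem lemma3p3:
  fixes C \<epsilon> :: real
  assumes "C > 0" and "0 < \<epsilon>" and "\<epsilon> < 1"
  defines "K \<equiv> C * cos (\<epsilon> * pi / 2) / 3 powr (\<epsilon> / 2)"
  shows "\<exists>k::real. 0 < k \<and> k < 1 \<and>
           (\<forall>z \<in> U_set C \<epsilon>.
              k * exp (K * cmod z powr \<epsilon>) \<le> cmod (exp z) \<and> cmod (exp z) \<le> exp (cmod z))"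
proof -
  define A where "A = C * cos (\<epsilon> * pi / 2)"
  have pe: "0 < pi * \<epsilon>" "pi * \<epsilon> < pi" using assms pi_gt_zero by auto
  have "0 < \<epsilon> * pi" using pe by (simp add: mult.commute)
  hence c1: "-(pi/2) < \<epsilon> * pi / 2" using pi_gt_zero by linarith
  have c2: "\<epsilon> * pi / 2 < pi/2" using pe by (simp add: mult.commute)
  have cpos: "cos (\<epsilon> * pi / 2) > 0" using c1 c2 by (rule cos_gt_zero_pi)
  have A0: "A \<ge> 0" using cpos assms unfolding A_def by simp
  have KA: "K = A / 3 powr (\<epsilon>/2)" unfolding K_def A_def by simp
  have K0: "K \<ge> 0" using A0 KA by simp
  define T where "T = max 4 ((4*C) powr (1/(1-\<epsilon>)))"
  define R where "R = T + 1 + C * T powr \<epsilon>"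
  define k where "k = min (1/2) (exp (-(K * R powr \<epsilon>)))"
  have k0: "0 < k" "k < 1" unfolding k_def by auto
  have main: "Re z \<ge> K * cmod z powr \<epsilon> - K * R powr \<epsilon>" if zU: "z \<in> U_set C \<epsilon>" for z
  proof -
    obtain w where w: "Re w > 0" "z = w + of_real C * (1 + w) powr (of_real \<epsilon>)"
      using zU unfolding U_set_def phi_map_def right_half_plane_def by auto
    define u where "u = 1 + w"
    define t where "t = cmod u"
    have ru: "Re u > 0" using w unfolding u_def by simp
    have t1: "t \<ge> 1" unfolding t_def using ru w(1) complex_Re_le_cmod[of u] unfolding u_def by simp
    have z: "z = w + of_real C * u powr of_real \<epsilon>" using w u_def by simp
    have "Re z = Re w + C * Re (u powr of_real \<epsilon>)" using z by simp
    moreover have "C * Re (u powr of_real \<epsilon>) \<ge> C * (t powr \<epsilon> * cos (\<epsilon>*pi/2))"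
      using re_powr[OF ru assms(2,3)] assms(1) unfolding t_def by simp
    ultimately have reZ: "Re z \<ge> A * t powr \<epsilon>" using w(1) unfolding A_def by (simp add: algebra_simps)
    have nw: "cmod w \<le> t + 1" unfolding t_def u_def
      using norm_triangle_ineq4[of "1+w" 1] by simp
    have "cmod z \<le> cmod w + cmod (of_real C * u powr of_real \<epsilon>)"
      unfolding z by (rule norm_triangle_ineq)
    also have "cmod (of_real C * u powr of_real \<epsilon>) = C * t powr \<epsilon>"
      using assms(1) unfolding t_def by (simp add: norm_mult norm_powr_real_powr')
    finally have nz: "cmod z \<le> t + 1 + C * t powr \<epsilon>" using nw by simp
    show ?thesis
    proof (cases "t \<ge> T")
      case True
      have "1 + C * t powr \<epsilon> \<le> t/2"
        using big_t[OF assms(1-3)] True unfolding T_def by simp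
      hence "cmod z \<le> sqrt 3 * t" using nz t1
      proof -
        have "sqrt 3 \<ge> 3/2" by (rule real_le_rsqrt) (simp add: power2_eq_square)
        hence "3/2 * t \<le> sqrt 3 * t" using t1 by (intro mult_right_mono) auto
        thus ?thesis using nz \<open>1 + C * t powr \<epsilon> \<le> t/2\<close> by simp
      qed
      hence "cmod z powr \<epsilon> \<le> (sqrt 3 * t) powr \<epsilon>"
        using assms(2) by (intro powr_mono2) auto
      also have "\<dots> = 3 powr (\<epsilon>/2) * t powr \<epsilon>" using t1 by (simp add: sq3)
      finally have "K * cmod z powr \<epsilon> \<le> K * (3 powr (\<epsilon>/2) * t powr \<epsilon>)"
        using K0 by (intro mult_left_mono) auto
      also have "\<dots> = A * t powr \<epsilon>" unfolding KA by simp
      finally have "K * cmod z powr \<epsilon> \<le> Re z" using reZ by simp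
      moreover have "K * R powr \<epsilon> \<ge> 0" using K0 by simp
      ultimately show ?thesis by simp
    next
      case False
      have "t powr \<epsilon> \<le> T powr \<epsilon>" using False t1 assms(2) by (intro powr_mono2) auto
      hence "cmod z \<le> R" using nz False assms(1) unfolding R_def
        by (smt (verit) mult_left_mono)
      hence "cmod z powr \<epsilon> \<le> R powr \<epsilon>" using assms(2) by (intro powr_mono2) auto
      hence "K * cmod z powr \<epsilon> \<le> K * R powr \<epsilon>" using K0 by (intro mult_left_mono) auto
      moreover have "A * t powr \<epsilon> \<ge> 0" using A0 by simp
      ultimately show ?thesis using reZ by simp
    qed
  qed
  show ?thesis
  proof (intro exI[of _ k] conjI k0 ballI)
    fix z assume zU: "z \<in> U_set C \<epsilon>"
    show "cmod (exp z) \<le> exp (cmod z)" using complex_Re_le_cmod[of z] by simp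
    have "k * exp (K * cmod z powr \<epsilon>) \<le> exp (-(K * R powr \<epsilon>)) * exp (K * cmod z powr \<epsilon>)"
      unfolding k_def by (intro mult_right_mono) auto
    also have "\<dots> = exp (K * cmod z powr \<epsilon> - K * R powr \<epsilon>)" by (simp add: exp_diff exp_minus field_simps)
    also have "\<dots> \<le> exp (Re z)" using main[OF zU] by simp
    finally show "k * exp (K * cmod z powr \<epsilon>) \<le> cmod (exp z)" by simp
  qed
qed

end
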